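(* Let $R:\ \mu=\rho^{(0)}\to\dots\to\rho^{(l)}=\nu$ be a sequence of diagrams and let $T\in\mathcal{T}(\lambda,R)$ be $\nu$-bounded. Then $\rho(\alpha)_{T(\alpha)}>c(\alpha)$ for all boxes $\alpha\in\lambda$ with $T(\alpha)$ unbarred.
   Context: Partitions are identified with Young diagrams; box $(i,j)$ is in row $i$, column $j$; content $c(\alpha)=j-i$; $\nu'_j$ is the length of column $j$ of $\nu$. A reverse $\lambda$-tableau is a filling $T$ of $\lambda$ by positive integers weakly decreasing along rows and strictly decreasing down columns. $\rho\to\sigma$ means $\sigma$ is obtained from $\rho$ by adding one box; for $R:\ \mu=\rho^{(0)}\to\dots\to\rho^{(l)}=\nu$, $r_i$ is the row of the box added to $\rho^{(i-1)}$. Column order: columns left to right, within a column bottom to top; $\prec$ is strict precedence. $\mathcal{T}(\lambda,R)$ consists of reverse $\lambda$-tableaux $T$ with chosen boxes $\alpha_1\prec\dots\prec\alpha_l$ such that $T(\alpha_i)=r_i$; those entries are barred, the rest unbarred. For $\alpha$ with $\alpha_i\prec\alpha\prec\alpha_{i+1}$ ($0\le i\le l$, conditions with $\alpha_0,\alpha_{l+1}$ void), $\rho(\alpha)=\rho^{(i)}$, and $\rho(\alpha)_k$ is the length of row $k$ of $\rho(\alpha)$. $T$ is $\nu$-bounded if $T(1,j)\le\nu'_j$ for all $j=1,\dots,\lambda_1$. *)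

theory Defs
  imports Main
begin

(* Boxes are pairs (row, column), 1-indexed. A Young diagram is a finite set of boxes
   closed under moving up/left. *)
definition is_diagram :: "(nat \<times> nat) set \<Rightarrow> bool" where
  "is_diagram D \<longleftrightarrow> finite D \<and>
     (\<forall>(i,j)\<in>D. 1 \<le> i \<and> 1 \<le> j \<and>
        (\<forall>i' j'. 1 \<le> i' \<and> i' \<le> i \<and> 1 \<le> j' \<and> j' \<le> j \<longrightarrow> (i',j') \<in> D))"

definition row_len :: "(nat \<times> nat) set \<Rightarrow> nat \<Rightarrow> nat" where
  "row_len D k = card {j. (k,j) \<in> D}"

definition col_len :: "(nat \<times> nat) set \<Rightarrow> nat \<Rightarrow> nat" where
  "col_len D j = card {i. (i,j) \<in> D}"

definition content :: "nat \<times> nat \<Rightarrow> int" where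
  "content b = int (snd b) - int (fst b)"

definition adds_box :: "(nat \<times> nat) set \<Rightarrow> (nat \<times> nat) set \<Rightarrow> bool" where
  "adds_box \<rho> \<sigma> \<longleftrightarrow> is_diagram \<rho> \<and> is_diagram \<sigma> \<and> \<rho> \<subseteq> \<sigma> \<and> card (\<sigma> - \<rho>) = 1"

definition added_row :: "(nat \<times> nat) set \<Rightarrow> (nat \<times> nat) set \<Rightarrow> nat" where
  "added_row \<rho> \<sigma> = fst (THE b. b \<in> \<sigma> - \<rho>)"

(* R : mu = rhos!0 -> ... -> rhos!l = nu, with l = length rhos - 1 *)
definition is_diagram_seq :: "(nat \<times> nat) set list \<Rightarrow> bool" where
  "is_diagram_seq rhos \<longleftrightarrow> rhos \<noteq> [] \<and> is_diagram (hd rhos) \<and>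
     (\<forall>i. Suc i < length rhos \<longrightarrow> adds_box (rhos ! i) (rhos ! Suc i))"

(* r_i (1-based), i = 1..l *)
definition seq_row :: "(nat \<times> nat) set list \<Rightarrow> nat \<Rightarrow> nat" where
  "seq_row rhos i = added_row (rhos ! (i - 1)) (rhos ! i)"

definition reverse_tableau :: "(nat \<times> nat) set \<Rightarrow> (nat \<times> nat \<Rightarrow> nat) \<Rightarrow> bool" where
  "reverse_tableau lam T \<longleftrightarrow>
     (\<forall>b\<in>lam. 1 \<le> T b) \<and>
     (\<forall>i j. (i,j) \<in> lam \<and> (i, Suc j) \<in> lam \<longrightarrow> T (i, Suc j) \<le> T (i,j)) \<and>
     (\<forall>i j. (i,j) \<in> lam \<and> (Suc i, j) \<in> lam \<longrightarrow> T (Suc i, j) < T (i,j))"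

definition col_prec :: "nat \<times> nat \<Rightarrow> nat \<times> nat \<Rightarrow> bool" where
  "col_prec a b \<longleftrightarrow> snd a < snd b \<or> (snd a = snd b \<and> fst b < fst a)"

(* (T, alphas) in calT(lambda, R); alphas!(k-1) is alpha_k, k = 1..l *)
definition in_calT :: "(nat \<times> nat) set \<Rightarrow> (nat \<times> nat) set list \<Rightarrow> (nat \<times> nat \<Rightarrow> nat)
    \<Rightarrow> (nat \<times> nat) list \<Rightarrow> bool" where
  "in_calT lam rhos T alphas \<longleftrightarrow> reverse_tableau lam T \<and>
     length alphas = length rhos - 1 \<and> set alphas \<subseteq> lam \<and>
     sorted_wrt col_prec alphas \<and>
     (\<forall>k. 1 \<le> k \<and> k \<le> length alphas \<longrightarrow> T (alphas ! (k - 1)) = seq_row rhos k)"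

(* rho(alpha) = rho^(i) where i = number of chosen boxes preceding alpha *)
definition rho_at :: "(nat \<times> nat) set list \<Rightarrow> (nat \<times> nat) list \<Rightarrow> nat \<times> nat \<Rightarrow> (nat \<times> nat) set" where
  "rho_at rhos alphas a = rhos ! card {k. k < length alphas \<and> col_prec (alphas ! k) a}"

definition nu_bounded :: "(nat \<times> nat) set \<Rightarrow> (nat \<times> nat) set \<Rightarrow> (nat \<times> nat \<Rightarrow> nat) \<Rightarrow> bool" where
  "nu_bounded lam nu T \<longleftrightarrow> (\<forall>j. 1 \<le> j \<and> j \<le> row_len lam 1 \<longrightarrow> T (1,j) \<le> col_len nu j)"

end

theory Submission
  imports Defs
begin

lemma diag_mem: "is_diagram D \<Longrightarrow> (i,j)\<in>D \<Longrightarrow> 1\<le>i \<and> 1\<le>j"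
  unfolding is_diagram_def by blast

lemma diag_down: "is_diagram D \<Longrightarrow> (i,j)\<in>D \<Longrightarrow> 1\<le>i' \<Longrightarrow> i'\<le>i \<Longrightarrow> 1\<le>j' \<Longrightarrow> j'\<le>j \<Longrightarrow> (i',j')\<in>D"
  unfolding is_diagram_def by blast

lemma diag_finite: "is_diagram D \<Longrightarrow> finite D"
  unfolding is_diagram_def by blast

lemma row_set_finite: "is_diagram D \<Longrightarrow> finite {j. (r,j)\<in>D}"
proof -
  assume d: "is_diagram D"
  have "{j. (r,j)\<in>D} \<subseteq> snd ` D" by force
  then show ?thesis using diag_finite[OF d] finite_subset by blast
qed

lemma col_set_finite: "is_diagram D \<Longrightarrow> finite {i. (i,j)\<in>D}"
proof -
  assume d: "is_diagram D"
  have "{i. (i,j)\<in>D} \<subseteq> fst ` D" by force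
  then show ?thesis using diag_finite[OF d] finite_subset by blast
qed

lemma row_len_iff: assumes d: "is_diagram D"
  shows "(r,j)\<in>D \<longleftrightarrow> (1\<le>j \<and> j \<le> row_len D r)"
proof
  assume h: "(r,j)\<in>D"
  have "{1..j} \<subseteq> {j. (r,j)\<in>D}"
    using diag_down[OF d h] diag_mem[OF d h] by auto
  then have "card {1..j} \<le> row_len D r"
    unfolding row_len_def using card_mono row_set_finite[OF d] by blast
  then show "1\<le>j \<and> j \<le> row_len D r" using diag_mem[OF d h] by simp
next
  assume h: "1\<le>j \<and> j \<le> row_len D r"
  show "(r,j)\<in>D"
  proof (rule ccontr)
    assume n: "(r,j)\<notin>D"
    have "{j. (r,j)\<in>D} \<subseteq> {1..<j}"
    proof
      fix x assume "x \<in> {j. (r,j)\<in>D}"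
      then have x: "(r,x)\<in>D" by simp
      have "x < j"
      proof (rule ccontr)
        assume "\<not> x < j"
        then have "(r,j)\<in>D" using diag_down[OF d x] diag_mem[OF d x] h by auto
        then show False using n by simp
      qed
      then show "x \<in> {1..<j}" using diag_mem[OF d x] by simp
    qed
    then have "row_len D r \<le> card {1..<j}" unfolding row_len_def
      using card_mono by blast
    then show False using h by simp arith
  qed
qed

lemma col_len_iff: assumes d: "is_diagram D"
  shows "(i,c)\<in>D \<longleftrightarrow> (1\<le>i \<and> i \<le> col_len D c)"
proof
  assume h: "(i,c)\<in>D"
  have "{1..i} \<subseteq> {i. (i,c)\<in>D}"
    using diag_down[OF d h] diag_mem[OF d h] by auto
  then have "card {1..i} \<le> col_len D c"
    unfolding col_len_def using card_mono col_set_finite[OF d] by blast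
  then show "1\<le>i \<and> i \<le> col_len D c" using diag_mem[OF d h] by simp
next
  assume h: "1\<le>i \<and> i \<le> col_len D c"
  show "(i,c)\<in>D"
  proof (rule ccontr)
    assume n: "(i,c)\<notin>D"
    have "{i. (i,c)\<in>D} \<subseteq> {1..<i}"
    proof
      fix x assume "x \<in> {i. (i,c)\<in>D}"
      then have x: "(x,c)\<in>D" by simp
      have "x < i"
      proof (rule ccontr)
        assume "\<not> x < i"
        then have "(i,c)\<in>D" using diag_down[OF d x] diag_mem[OF d x] h by auto
        then show False using n by simp
      qed
      then show "x \<in> {1..<i}" using diag_mem[OF d x] by simp
    qed
    then have "col_len D c \<le> card {1..<i}" unfolding col_len_def
      using card_mono by blast
    then show False using h by simp arith
  qed
qed

lemma row_len_antimono: assumes d: "is_diagram D" and "1 \<le> r" "r \<le> r'"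
  shows "row_len D r' \<le> row_len D r"
proof (cases "row_len D r' = 0")
  case True then show ?thesis by simp
next
  case False
  let ?m = "row_len D r'"
  have "(r', ?m) \<in> D" using row_len_iff[OF d] False by simp
  then have "(r, ?m) \<in> D" using diag_down[OF d] assms False by simp
  then show ?thesis using row_len_iff[OF d] by simp
qed

lemma seq_diag: assumes s: "is_diagram_seq rhos" and m: "m < length rhos"
  shows "is_diagram (rhos ! m)"
proof (cases m)
  case 0
  then show ?thesis using s unfolding is_diagram_seq_def by (metis hd_conv_nth)
next
  case (Suc k)
  then have "adds_box (rhos!k) (rhos!Suc k)" using s m unfolding is_diagram_seq_def by simp
  then show ?thesis unfolding adds_box_def using Suc by simp
qed

lemma seq_sub: assumes s: "is_diagram_seq rhos"
  shows "m \<le> m' \<Longrightarrow> m' < length rhos \<Longrightarrow> rhos ! m \<subseteq> rhos ! m'"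
proof (induction m')
  case 0 then show ?case by simp
next
  case (Suc m')
  show ?case
  proof (cases "m = Suc m'")
    case True then show ?thesis by simp
  next
    case False
    then have "rhos ! m \<subseteq> rhos ! m'" using Suc by simp
    moreover have "adds_box (rhos!m') (rhos!Suc m')" using s Suc(3) unfolding is_diagram_seq_def by simp
    ultimately show ?thesis unfolding adds_box_def by blast
  qed
qed

lemma seq_row_mono: assumes s: "is_diagram_seq rhos" "m \<le> m'" "m' < length rhos"
  shows "row_len (rhos!m) r \<le> row_len (rhos!m') r"
proof -
  have "{j. (r,j) \<in> rhos!m} \<subseteq> {j. (r,j) \<in> rhos!m'}" using seq_sub[OF assms] by blast
  then show ?thesis unfolding row_len_def
    using card_mono row_set_finite[OF seq_diag[OF s(1) s(3)]] by blast
qed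

lemma seq_step: assumes s: "is_diagram_seq rhos" and m: "Suc m < length rhos"
  shows "row_len (rhos!Suc m) r \<le> Suc (row_len (rhos!m) r)"
    and "row_len (rhos!m) r < row_len (rhos!Suc m) r \<Longrightarrow> added_row (rhos!m) (rhos!Suc m) = r"
proof -
  have ab: "adds_box (rhos!m) (rhos!Suc m)" using s m unfolding is_diagram_seq_def by simp
  then obtain b where b: "rhos!Suc m - rhos!m = {b}" unfolding adds_box_def
    using card_1_singletonE by blast
  have fin: "finite {j. (r,j) \<in> rhos!m}" using ab row_set_finite unfolding adds_box_def by blast
  have sub: "{j. (r,j) \<in> rhos!Suc m} \<subseteq> insert (snd b) {j. (r,j) \<in> rhos!m}"
    using b by force
  have "card {j. (r,j) \<in> rhos!Suc m} \<le> card (insert (snd b) {j. (r,j) \<in> rhos!m})"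
    using card_mono[OF _ sub] fin by simp
  also have "\<dots> \<le> Suc (card {j. (r,j) \<in> rhos!m})" using fin
    by (simp add: card_insert_if)
  finally show "row_len (rhos!Suc m) r \<le> Suc (row_len (rhos!m) r)" unfolding row_len_def .
  assume lt: "row_len (rhos!m) r < row_len (rhos!Suc m) r"
  have "fst b = r"
  proof (rule ccontr)
    assume "fst b \<noteq> r"
    then have "{j. (r,j) \<in> rhos!Suc m} \<subseteq> {j. (r,j) \<in> rhos!m}" using b by force
    then have "row_len (rhos!Suc m) r \<le> row_len (rhos!m) r" unfolding row_len_def
      using card_mono fin by blast
    then show False using lt by simp
  qed
  moreover have "(THE b'. b' \<in> rhos!Suc m - rhos!m) = b" using b by simp
  ultimately show "added_row (rhos!m) (rhos!Suc m) = r" unfolding added_row_def by simp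
qed

lemma ivt_nat: "N \<le> L \<Longrightarrow> (f N :: nat) < j \<Longrightarrow> j \<le> f L \<Longrightarrow> \<exists>k. N \<le> k \<and> k < L \<and> f k < j \<and> j \<le> f (Suc k)"
proof (induction L)
  case 0 then show ?case by simp
next
  case (Suc L)
  have "N \<noteq> Suc L" using Suc.prems by auto
  then have NL: "N \<le> L" using Suc.prems(1) by simp
  show ?case
  proof (cases "f L < j")
    case True
    then show ?thesis using Suc.prems NL by (intro exI[of _ L]) auto
  next
    case False
    note NL
    then obtain k where "N \<le> k \<and> k < L \<and> f k < j \<and> j \<le> f (Suc k)" using Suc False by force
    then show ?thesis by (intro exI[of _ k]) auto
  qed
qed

lemma row_dec: assumes d: "is_diagram lam" and rt: "reverse_tableau lam T" and j1: "1 \<le> j"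
  shows "(i,j+dd)\<in>lam \<Longrightarrow> T (i,j+dd) \<le> T (i,j)"
proof (induction dd)
  case 0 then show ?case by simp
next
  case (Suc dd)
  have i1: "1 \<le> i" using diag_mem[OF d Suc.prems] by simp
  have m: "(i,j+dd)\<in>lam" using diag_down[OF d Suc.prems, of i "j+dd"] i1 j1 by simp
  then have "T (i, Suc (j+dd)) \<le> T (i,j+dd)" using rt Suc.prems unfolding reverse_tableau_def by simp
  then show ?case using Suc.IH m by simp
qed

lemma col_inc: assumes d: "is_diagram lam" and rt: "reverse_tableau lam T"
  shows "(i+dd,j)\<in>lam \<Longrightarrow> 1 \<le> i \<Longrightarrow> T (i+dd,j) + dd \<le> T (i,j)"
proof (induction dd)
  case 0 then show ?case by simp
next
  case (Suc dd)
  have m: "(i+dd,j)\<in>lam" using diag_down[OF d Suc.prems(1)] diag_mem[OF d Suc.prems(1)] Suc.prems by auto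
  then have "T (Suc (i+dd), j) < T (i+dd,j)" using rt Suc.prems unfolding reverse_tableau_def by simp
  then show ?case using Suc.IH m Suc.prems by simp
qed

lemma cp_irrefl: "\<not> col_prec a a" unfolding col_prec_def by simp
lemma cp_trans: "col_prec a b \<Longrightarrow> col_prec b c \<Longrightarrow> col_prec a c" unfolding col_prec_def by auto
lemma cp_asym: "col_prec a b \<Longrightarrow> \<not> col_prec b a" unfolding col_prec_def by auto
lemma cp_total: "a \<noteq> b \<Longrightarrow> col_prec a b \<or> col_prec b a"
  unfolding col_prec_def by (cases a; cases b) auto

lemma init_seg: assumes "\<And>k. k\<in>S \<Longrightarrow> k < (l::nat)" and "\<And>k k'. k\<in>S \<Longrightarrow> k'<k \<Longrightarrow> k'\<in>S"
  shows "x \<in> S \<longleftrightarrow> x < card S"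
proof -
  have fin: "finite S" using assms(1) finite_subset[of S "{..<l}"] by blast
  show ?thesis
  proof
    assume x: "x \<in> S"
    have "{..x} \<subseteq> S" using assms(2)[OF x] x by (auto simp: le_less)
    then have "card {..x} \<le> card S" using card_mono fin by blast
    then show "x < card S" by simp
  next
    assume x: "x < card S"
    show "x \<in> S"
    proof (rule ccontr)
      assume n: "x \<notin> S"
      have "S \<subseteq> {..<x}"
      proof
        fix y assume y: "y \<in> S"
        show "y \<in> {..<x}"
        proof (rule ccontr)
          assume "y \<notin> {..<x}"
          then have "x < y \<or> x = y" by auto
          then show False using n y assms(2)[OF y] by auto
        qed
      qed
      then have "card S \<le> x" using card_mono[of "{..<x}" S] by simp
      then show False using x by simp
    qed
  qed
qed


theorem lemma2p5:
  fixes lam :: "(nat \<times> nat) set" and rhos :: "(nat \<times> nat) set list"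
    and T :: "nat \<times> nat \<Rightarrow> nat" and alphas :: "(nat \<times> nat) list"
  assumes "is_diagram lam"
    and "is_diagram_seq rhos"
    and "in_calT lam rhos T alphas"
    and "nu_bounded lam (last rhos) T"
    and "a \<in> lam" and "a \<notin> set alphas"
  shows "int (row_len (rho_at rhos alphas a) (T a)) > content a"
proof -
  note d = assms(1) and s = assms(2)
  have rt: "reverse_tableau lam T" and len: "length alphas = length rhos - 1"
    and sub: "set alphas \<subseteq> lam" and srt: "sorted_wrt col_prec alphas"
    and Tv: "\<And>k. 1 \<le> k \<Longrightarrow> k \<le> length alphas \<Longrightarrow> T (alphas ! (k - 1)) = seq_row rhos k"
    using assms(3) unfolding in_calT_def by auto
  define l where "l = length alphas"
  have ne: "rhos \<noteq> []" using s unfolding is_diagram_seq_def by simp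
  have Ll: "length rhos = Suc l" using len ne l_def by (cases rhos) auto
  have lastr: "last rhos = rhos ! l" using ne Ll by (simp add: last_conv_nth)
  have Tpos: "\<And>b. b \<in> lam \<Longrightarrow> 1 \<le> T b" using rt unfolding reverse_tableau_def by blast
  have sortn: "\<And>k k'. k < k' \<Longrightarrow> k' < l \<Longrightarrow> col_prec (alphas!k) (alphas!k')"
    using srt l_def by (simp add: sorted_wrt_iff_nth_less)
  have inlam: "\<And>k. k < l \<Longrightarrow> alphas ! k \<in> lam" using sub l_def by auto
  define N where "N b = card {k. k < l \<and> \<not> col_prec b (alphas!k)}" for b
  have Nchar: "\<And>b k. k < l \<Longrightarrow> (k < N b \<longleftrightarrow> \<not> col_prec b (alphas!k))"
  proof -
    fix b k assume k: "k < l"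
    have "k \<in> {k. k < l \<and> \<not> col_prec b (alphas!k)} \<longleftrightarrow> k < card {k. k < l \<and> \<not> col_prec b (alphas!k)}"
    proof (rule init_seg[where l=l])
      fix x assume "x \<in> {k. k < l \<and> \<not> col_prec b (alphas!k)}" then show "x < l" by simp
    next
      fix x x' assume x: "x \<in> {k. k < l \<and> \<not> col_prec b (alphas!k)}" and "x' < x"
      then show "x' \<in> {k. k < l \<and> \<not> col_prec b (alphas!k)}"
        using sortn[of x' x] cp_trans[of b "alphas!x'" "alphas!x"] by auto
    qed
    then show "k < N b \<longleftrightarrow> \<not> col_prec b (alphas!k)" using k N_def by simp
  qed
  have Nle: "\<And>b. N b \<le> l"
  proof -
    fix b
    have "{k. k < l \<and> \<not> col_prec b (alphas!k)} \<subseteq> {..<l}" by auto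
    then show "N b \<le> l" unfolding N_def using card_mono[of "{..<l}"] by fastforce
  qed
  have Nal: "\<And>k. k < l \<Longrightarrow> N (alphas ! k) = Suc k"
  proof -
    fix k assume k: "k < l"
    have "{k'. k' < l \<and> \<not> col_prec (alphas!k) (alphas!k')} = {..k}"
    proof (rule set_eqI)
      fix x
      show "x \<in> {k'. k' < l \<and> \<not> col_prec (alphas!k) (alphas!k')} \<longleftrightarrow> x \<in> {..k}"
      proof (cases "x < k")
        case True then show ?thesis using k sortn[of x k] cp_asym by auto
      next
        case False
        show ?thesis
        proof (cases "x = k")
          case True then show ?thesis using k cp_irrefl by auto
        next
          case False2: False
          then show ?thesis using False sortn[of k x] by auto
        qed
      qed
    qed
    then show "N (alphas ! k) = Suc k" unfolding N_def by simp
  qed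
  have claim: "\<forall>b. b \<in> lam \<longrightarrow> card {c \<in> lam. col_prec b c} = n \<longrightarrow>
      content b + 1 \<le> int (row_len (rhos ! N b) (T b))" for n
  proof (induction n rule: less_induct)
    case (less n)
    have IH: "\<And>c. c \<in> lam \<Longrightarrow> card {e \<in> lam. col_prec c e} < n \<Longrightarrow>
      content c + 1 \<le> int (row_len (rhos ! N c) (T c))" using less by blast
    show ?case
    proof (intro allI impI)
      fix b assume b: "b \<in> lam" and bn: "card {c \<in> lam. col_prec b c} = n"
      have IH2: "\<And>c. c \<in> lam \<Longrightarrow> col_prec b c \<Longrightarrow>
          content c + 1 \<le> int (row_len (rhos ! N c) (T c))"
      proof -
        fix c assume c: "c \<in> lam" "col_prec b c"
        have "{e \<in> lam. col_prec c e} \<subset> {e \<in> lam. col_prec b e}"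
          using c cp_trans cp_irrefl by blast
        then have "card {e \<in> lam. col_prec c e} < card {e \<in> lam. col_prec b e}"
          using psubset_card_mono diag_finite[OF d] by (metis (no_types, lifting) finite_subset mem_Collect_eq subsetI)
        then show "content c + 1 \<le> int (row_len (rhos ! N c) (T c))" using IH c bn by simp
      qed
      obtain i j where bij: "b = (i,j)" by (cases b)
      have ij: "1 \<le> i" "1 \<le> j" using diag_mem[OF d] b bij by auto
      define t where "t = T b"
      have t1: "1 \<le> t" using Tpos b t_def by simp
      have NbL: "N b < length rhos" using Nle Ll by (simp add: less_Suc_eq_le)
      show "content b + 1 \<le> int (row_len (rhos ! N b) (T b))"
      proof (cases "i = 1")
        case False
        define be where "be = (i - 1, j)"
        have bel: "be \<in> lam"
          using diag_down[OF d, of i j "i - 1" j] b bij ij be_def False by simp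
        have cpb: "col_prec b be" using bij be_def False ij unfolding col_prec_def by auto
        have Tbe: "T b < T be"
        proof -
          have si: "Suc (i - 1) = i" using ij by simp
          have "(i - 1, j) \<in> lam \<and> (Suc (i - 1), j) \<in> lam \<longrightarrow> T (Suc (i - 1), j) < T (i - 1, j)"
            using rt unfolding reverse_tableau_def by blast
          then show ?thesis using si bel b bij be_def by simp
        qed
        have cbe: "content be = content b + 1" using bij be_def ij False unfolding content_def by auto
        have between: "\<And>x. col_prec b x \<Longrightarrow> \<not> col_prec be x \<Longrightarrow> x = be"
          using bij be_def unfolding col_prec_def by (cases "b"; auto)
        have NN: "N be \<le> Suc (N b)"
        proof (rule ccontr)
          assume "\<not> N be \<le> Suc (N b)"
          then have lt: "Suc (N b) < N be" by simp
          then have l1: "Suc (N b) < l" using Nle[of be] by simp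
          have "alphas ! N b = be"
            using between Nchar[of "N b" b] Nchar[of "N b" be] lt l1 by auto
          moreover have "alphas ! Suc (N b) = be"
            using between Nchar[of "Suc (N b)" b] Nchar[of "Suc (N b)" be] lt l1 by auto
          ultimately show False using sortn[of "N b" "Suc (N b)"] l1 cp_irrefl by auto
        qed
        have NbeL: "N be < length rhos" using Nle Ll by (simp add: less_Suc_eq_le)
        have step: "row_len (rhos ! N be) (T be) \<le> Suc (row_len (rhos ! N b) (T be))"
        proof (cases "N be \<le> N b")
          case True
          then show ?thesis using seq_row_mono[OF s True NbL] by (meson le_SucI)
        next
          case False
          then have "N be = Suc (N b)" using NN by simp
          then show ?thesis using seq_step(1)[OF s, of "N b"] NbeL by simp
        qed
        have mono: "row_len (rhos ! N b) (T be) \<le> row_len (rhos ! N b) (T b)"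
          using row_len_antimono[OF seq_diag[OF s NbL]] Tpos[OF b] Tbe by simp
        have "content be + 1 \<le> int (row_len (rhos ! N be) (T be))" using IH2 bel cpb by simp
        then show ?thesis using cbe step mono by linarith
      next
        case True
        have cb: "content b + 1 = int j" using bij True unfolding content_def by simp
        show ?thesis
        proof (rule ccontr)
          assume "\<not> ?thesis"
          then have lt: "row_len (rhos ! N b) t < j" using cb t_def by simp
          have "j \<le> row_len lam 1" using row_len_iff[OF d] b bij True ij by auto
          then have "t \<le> col_len (rhos ! l) j"
            using assms(4) lastr t_def bij True ij unfolding nu_bounded_def by auto
          then have "(t,j) \<in> rhos ! l" using col_len_iff[OF seq_diag[OF s]] Ll t1 by simp
          then have jn: "j \<le> row_len (rhos ! l) t" using row_len_iff[OF seq_diag[OF s]] Ll by simp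
          obtain k where k: "N b \<le> k" "k < l" "row_len (rhos ! k) t < j" "j \<le> row_len (rhos ! Suc k) t"
            using ivt_nat[of "N b" l "\<lambda>m. row_len (rhos ! m) t" j] Nle lt jn by blast
          have kL: "Suc k < length rhos" using k Ll by simp
          have ar: "added_row (rhos ! k) (rhos ! Suc k) = t"
            using seq_step(2)[OF s kL] k by simp
          have Tx: "T (alphas ! k) = t"
            using Tv[of "Suc k"] ar k l_def unfolding seq_row_def by simp
          define x where "x = alphas ! k"
          have xl: "x \<in> lam" using inlam k x_def by simp
          have cpx: "col_prec b x" using Nchar[of k b] k x_def by simp
          have "content x + 1 \<le> int (row_len (rhos ! N x) (T x))" using IH2 xl cpx by simp
          moreover have "row_len (rhos ! N x) (T x) \<le> j"
            using Nal[of k] k x_def Tx seq_step(1)[OF s kL, of t] by simp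
          ultimately have cx: "content x + 1 \<le> int j" by simp
          obtain i' j' where xij: "x = (i',j')" by (cases x)
          have ij': "1 \<le> i'" "1 \<le> j'" using diag_mem[OF d] xl xij by auto
          have jj: "j < j'" using cpx bij True xij ij' unfolding col_prec_def by auto
          have i2: "2 \<le> i'" using cx xij jj unfolding content_def by simp
          have x1: "(1, j') \<in> lam" using diag_down[OF d, of i' j' 1 j'] xl xij ij' by simp
          have "T (1, j + (j' - j)) \<le> T (1, j)"
            using row_dec[OF d rt ij(2), of 1 "j' - j"] x1 jj by simp
          then have a1: "T (1, j') \<le> t" using jj t_def bij True by simp
          have "T (1 + (i' - 1), j') + (i' - 1) \<le> T (1, j')"
            using col_inc[OF d rt, of 1 "i' - 1" j'] xl xij ij' by simp
          then have "t + (i' - 1) \<le> T (1, j')" using Tx x_def xij ij' by simp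
          then show False using a1 i2 by simp
        qed
      qed
    qed
  qed
  have main: "content a + 1 \<le> int (row_len (rhos ! N a) (T a))" using claim assms(5) by blast
  have "{k. k < length alphas \<and> col_prec (alphas ! k) a} = {k. k < l \<and> \<not> col_prec a (alphas!k)}"
  proof (rule set_eqI)
    fix k
    show "k \<in> {k. k < length alphas \<and> col_prec (alphas ! k) a} \<longleftrightarrow> k \<in> {k. k < l \<and> \<not> col_prec a (alphas!k)}"
    proof (cases "k < l")
      case True
      then have "alphas ! k \<noteq> a" using assms(6) l_def by auto
      then show ?thesis using True cp_total cp_asym l_def by blast
    next
      case False then show ?thesis using l_def by simp
    qed
  qed
  then have "rho_at rhos alphas a = rhos ! N a" unfolding rho_at_def N_def by simp
  then show ?thesis using main by simp
qed

end
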